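(* Let $B$ be a positive integer and $a_1,\dots,a_N$ positive integers with $a_i\le B$ for all $i$. Let $b$ be the minimum number of parts in a partition of $\{1,\dots,N\}$ such that $\sum_{i\in P}a_i\le B$ for every part $P$ (the bin packing optimum). Consider the ring grooming instance with $n=N+1$, $c=B$, and list of traffic demands consisting of $2a_j$ copies of the pair $\{j,n\}$ for each $1\le j\le N$. Then its minimum number of ADMs satisfies $m=b+N$.
   Context: Ring grooming. An instance consists of integers $n\ge 2$ (ring size) and $c\ge 1$ (capacity), and a finite list $L$ of unordered pairs $\{j,k\}$ with $j\ne k$, $j,k\in\{1,\dots,n\}$ (repetitions allowed); these are the traffic demands. Let $d_{jk}=d_{kj}$ be the number of times $\{j,k\}$ occurs in $L$ (the traffic matrix; $d_{jj}=0$). Let $C_n$ be the cycle graph on vertices $1,\dots,n$ in cyclic order, with edges $\{l,l+1\}$ for $1\le l<n$ and $\{n,1\}$. A solution uses some finite number $r$ of "rings", each a copy of $C_n$ in which every edge has capacity $c$. A routing specifies, for every ring $i$ and every pair $j<k$, nonnegative integers $t^0_{ijk},t^1_{ijk}$: the amounts of $\{j,k\}$-traffic sent on ring $i$ along each of the two arcs of $C_n$ between $j$ and $k$. It is feasible if $\sum_i (t^0_{ijk}+t^1_{ijk})=d_{jk}$ for all $j<k$, and for every ring $i$ and every edge $e$ of $C_n$ the total traffic routed on ring $i$ along arcs containing $e$ is at most $c$. Ring $i$ needs an ADM (add/drop multiplexer) at vertex $j$ iff some traffic with endpoint $j$ is routed on ring $i$. The cost of a routing is the total number of ADMs, i.e.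 the number of pairs (ring $i$, vertex $j$) at which an ADM is needed. $m=m(n,c,L)$ denotes the minimum cost over all feasible routings. *)

theory Defs
  imports Main "HOL-Library.Disjoint_Sets"
begin

text \<open>Traffic demands are a list of pairs (j,k), read as unordered pairs {j,k}.
 Traffic matrix entry: number of occurrences of the unordered pair {j,k} in L.\<close>
definition traffic :: "(nat \<times> nat) list \<Rightarrow> nat \<Rightarrow> nat \<Rightarrow> nat" where
  "traffic L j k = (if j = k then 0 else length (filter (\<lambda>p. p = (j,k) \<or> p = (k,j)) L))"

text \<open>Edges of C_n are indexed by l in {1..n}: edge l = {l, l+1} for l < n, edge n = {n,1}.
 For j < k, arc 0 between j and k is j, j+1, ..., k and uses the edges l with j \<le> l < k;
 arc 1 is the complementary arc and uses the remaining edges.\<close>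
definition arc_uses :: "nat \<Rightarrow> nat \<Rightarrow> nat \<Rightarrow> nat \<Rightarrow> bool" where
  "arc_uses s j k l = (if s = 0 then j \<le> l \<and> l < k else \<not> (j \<le> l \<and> l < k))"

definition valid_pairs :: "nat \<Rightarrow> (nat \<times> nat) set" where
  "valid_pairs n = {(j,k). 1 \<le> j \<and> j < k \<and> k \<le> n}"

definition feasible_routing ::
  "nat \<Rightarrow> nat \<Rightarrow> (nat \<times> nat) list \<Rightarrow> nat \<Rightarrow> (nat \<Rightarrow> nat \<Rightarrow> nat \<Rightarrow> nat) \<Rightarrow> (nat \<Rightarrow> nat \<Rightarrow> nat \<Rightarrow> nat) \<Rightarrow> bool" where
  "feasible_routing n c L r t0 t1 \<longleftrightarrow>
     (\<forall>(j,k) \<in> valid_pairs n. (\<Sum>i<r. t0 i j k + t1 i j k) = traffic L j k) \<and>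
     (\<forall>i<r. \<forall>l \<in> {1..n}.
        (\<Sum>(j,k) \<in> valid_pairs n.
           (if arc_uses 0 j k l then t0 i j k else 0) + (if arc_uses 1 j k l then t1 i j k else 0)) \<le> c)"

definition needs_adm ::
  "nat \<Rightarrow> (nat \<Rightarrow> nat \<Rightarrow> nat \<Rightarrow> nat) \<Rightarrow> (nat \<Rightarrow> nat \<Rightarrow> nat \<Rightarrow> nat) \<Rightarrow> nat \<Rightarrow> nat \<Rightarrow> bool" where
  "needs_adm n t0 t1 i v \<longleftrightarrow>
     (\<exists>(j,k) \<in> valid_pairs n. (v = j \<or> v = k) \<and> t0 i j k + t1 i j k > 0)"

definition routing_cost ::
  "nat \<Rightarrow> nat \<Rightarrow> (nat \<Rightarrow> nat \<Rightarrow> nat \<Rightarrow> nat) \<Rightarrow> (nat \<Rightarrow> nat \<Rightarrow> nat \<Rightarrow> nat) \<Rightarrow> nat" where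
  "routing_cost n r t0 t1 = card {(i,v). i < r \<and> v \<in> {1..n} \<and> needs_adm n t0 t1 i v}"

definition min_adms :: "nat \<Rightarrow> nat \<Rightarrow> (nat \<times> nat) list \<Rightarrow> nat" where
  "min_adms n c L = (LEAST m. \<exists>r t0 t1. feasible_routing n c L r t0 t1 \<and> routing_cost n r t0 t1 = m)"

definition bin_packing_opt :: "nat \<Rightarrow> (nat \<Rightarrow> nat) \<Rightarrow> nat \<Rightarrow> nat" where
  "bin_packing_opt N a B = (LEAST b. \<exists>P. partition_on {1..N} P \<and> card P = b \<and> (\<forall>p\<in>P. sum a p \<le> B))"

definition bp_demands :: "nat \<Rightarrow> (nat \<Rightarrow> nat) \<Rightarrow> (nat \<times> nat) list" where
  "bp_demands N a = concat (map (\<lambda>j. replicate (2 * a j) (j, N + 1)) [1..<N+1])"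

end

theory Submission
  imports Defs
begin

lemma traffic_gen:
  assumes "m < T" "j < k"
  shows "length (filter (\<lambda>p. p = (j,k) \<or> p = (k,j))
           (concat (map (\<lambda>x. replicate (2 * a x) (x, T)) [1..<m+1])))
         = (if k = T \<and> 1 \<le> j \<and> j \<le> m then 2 * a j else 0)"
  using assms
proof (induction m)
  case 0
  then show ?case by simp
next
  case (Suc m)
  have "[1..<Suc m + 1] = [1..<m+1] @ [Suc m]" by simp
  then show ?case using Suc by (auto simp: filter_replicate)
qed

lemma traffic_bp:
  assumes "1 \<le> j" "j < k" "k \<le> N + 1"
  shows "traffic (bp_demands N a) j k = (if k = N + 1 then 2 * a j else 0)"
  using assms traffic_gen[of N "N+1" j k a]
  unfolding traffic_def bp_demands_def by auto

lemma finite_vp: "finite (valid_pairs n)"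
proof -
  have "valid_pairs n \<subseteq> {1..n} \<times> {1..n}" unfolding valid_pairs_def by auto
  then show ?thesis by (rule finite_subset) auto
qed

lemma sum_vp:
  fixes g :: "nat \<times> nat \<Rightarrow> nat"
  assumes "S \<subseteq> {1..N}"
    and "\<And>j k. (j,k) \<in> valid_pairs (N+1) \<Longrightarrow> k \<noteq> N+1 \<or> j \<notin> S \<Longrightarrow> g (j,k) = 0"
  shows "sum g (valid_pairs (N+1)) = (\<Sum>j\<in>S. g (j, N+1))"
proof -
  have sub: "(\<lambda>j. (j, N+1)) ` S \<subseteq> valid_pairs (N+1)"
    using assms(1) unfolding valid_pairs_def by auto
  have "sum g (valid_pairs (N+1)) = sum g ((\<lambda>j. (j, N+1)) ` S)"
    by (rule sum.mono_neutral_right[OF finite_vp sub]) (use assms(2) in auto)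
  also have "\<dots> = (\<Sum>j\<in>S. g (j, N+1))"
    by (subst sum.reindex) (auto simp: inj_on_def)
  finally show ?thesis .
qed

lemma sum_vp_ge:
  fixes g :: "nat \<times> nat \<Rightarrow> nat"
  shows "(\<Sum>j\<in>{1..N}. g (j, N+1)) \<le> sum g (valid_pairs (N+1))"
proof -
  have sub: "(\<lambda>j. (j, N+1)) ` {1..N} \<subseteq> valid_pairs (N+1)"
    unfolding valid_pairs_def by auto
  have "(\<Sum>j\<in>{1..N}. g (j, N+1)) = sum g ((\<lambda>j. (j, N+1)) ` {1..N})"
    by (subst sum.reindex) (auto simp: inj_on_def)
  also have "\<dots> \<le> sum g (valid_pairs (N+1))"
    by (rule sum_mono2[OF finite_vp sub]) auto
  finally show ?thesis .
qed


lemma upper: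
  fixes N B :: nat and a :: "nat \<Rightarrow> nat"
  assumes ab: "\<forall>i \<in> {1..N}. 1 \<le> a i \<and> a i \<le> B"
    and P: "partition_on {1..N} P" and PB: "\<forall>p\<in>P. sum a p \<le> B"
  shows "\<exists>r t0 t1. feasible_routing (N+1) B (bp_demands N a) r t0 t1
            \<and> routing_cost (N+1) r t0 t1 = card P + N"
proof -
  have UP: "\<Union>P = {1..N}" and dj: "disjoint P" and ne: "{} \<notin> P"
    using P unfolding partition_on_def by auto
  have finP: "finite P" using UP by (metis finite_UnionD finite_atLeastAtMost)
  define b where "b = card P"
  obtain f where f: "bij_betw f {..<b} P"
    using ex_bij_betw_nat_finite[OF finP] unfolding b_def lessThan_atLeast0 by blast
  have fP: "i < b \<Longrightarrow> f i \<in> P" for i using f by (auto simp: bij_betw_def)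
  have fsub: "i < b \<Longrightarrow> f i \<subseteq> {1..N}" for i using fP UP by blast
  have fne: "i < b \<Longrightarrow> f i \<noteq> {}" for i using fP ne by metis
  have fin_f: "i < b \<Longrightarrow> finite (f i)" for i using fsub finite_subset by blast
  have ex: "j \<in> {1..N} \<Longrightarrow> \<exists>i<b. j \<in> f i" for j
  proof -
    assume "j \<in> {1..N}"
    then obtain p where "p \<in> P" "j \<in> p" using UP by blast
    then obtain i where "i < b" "f i = p" using f unfolding bij_betw_def by auto
    then show ?thesis using \<open>j \<in> p\<close> by blast
  qed
  have uq: "i < b \<Longrightarrow> i' < b \<Longrightarrow> j \<in> f i \<Longrightarrow> j \<in> f i' \<Longrightarrow> i = i'" for i i' j
  proof -
    assume h: "i < b" "i' < b" "j \<in> f i" "j \<in> f i'"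
    have "f i = f i'"
      using dj fP[OF h(1)] fP[OF h(2)] h(3,4) unfolding pairwise_def disjnt_def by blast
    then show "i = i'" using f h(1,2) unfolding bij_betw_def inj_on_def by auto
  qed
  define t where "t = (\<lambda>i j k. if k = N + 1 \<and> j \<in> f i then a j else (0::nat))"
  have dem: "(\<Sum>i<b. t i j k + t i j k) = traffic (bp_demands N a) j k"
    if jk: "(j,k) \<in> valid_pairs (N+1)" for j k
  proof (cases "k = N + 1")
    case True
    then have j: "j \<in> {1..N}" using jk unfolding valid_pairs_def by auto
    then obtain i0 where i0: "i0 < b" "j \<in> f i0" using ex by blast
    have "(\<Sum>i<b. t i j k + t i j k) = (\<Sum>i<b. if i0 = i then 2 * a j else 0)"
      by (rule sum.cong) (use uq i0 True in \<open>auto simp: t_def\<close>)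
    also have "\<dots> = 2 * a j" using i0 by simp
    finally show ?thesis using traffic_bp[of j k N a] jk True unfolding valid_pairs_def by auto
  next
    case False
    then show ?thesis using traffic_bp[of j k N a] jk unfolding valid_pairs_def t_def by auto
  qed
  have load: "(\<Sum>(j,k) \<in> valid_pairs (N+1).
           (if arc_uses 0 j k l then t i j k else 0) + (if arc_uses 1 j k l then t i j k else 0)) \<le> B"
    if i: "i < b" for i l
  proof -
    have "(\<Sum>(j,k) \<in> valid_pairs (N+1).
           (if arc_uses 0 j k l then t i j k else 0) + (if arc_uses 1 j k l then t i j k else 0))
        = (\<Sum>(j,k) \<in> valid_pairs (N+1). t i j k)"
      by (rule sum.cong) (auto simp: arc_uses_def)
    also have "\<dots> = (\<Sum>j \<in> f i. t i j (N+1))"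
      by (subst sum_vp[OF fsub[OF i], of "\<lambda>(j,k). t i j k"]) (auto simp: t_def)
    also have "\<dots> = sum a (f i)" by (simp add: t_def)
    also have "\<dots> \<le> B" using PB fP[OF i] by blast
    finally show ?thesis .
  qed
  have feas: "feasible_routing (N+1) B (bp_demands N a) b t t"
    unfolding feasible_routing_def using dem load by auto
  have na: "needs_adm (N+1) t t i v \<longleftrightarrow> v \<in> f i \<or> v = N + 1"
    if i: "i < b" and v: "v \<in> {1..N+1}" for i v
  proof
    assume "needs_adm (N+1) t t i v"
    then obtain j k where "(j,k) \<in> valid_pairs (N+1)" "v = j \<or> v = k" "t i j k + t i j k > 0"
      unfolding needs_adm_def by auto
    then show "v \<in> f i \<or> v = N + 1" by (auto simp: t_def split: if_splits)
  next
    assume h: "v \<in> f i \<or> v = N + 1"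
    show "needs_adm (N+1) t t i v"
    proof (cases "v = N + 1")
      case True
      obtain j where j: "j \<in> f i" using fne[OF i] by blast
      then have "j \<in> {1..N}" using fsub[OF i] by blast
      then have "1 \<le> a j" using ab by blast
      then show ?thesis using True j \<open>j \<in> {1..N}\<close> unfolding needs_adm_def valid_pairs_def t_def
        by (intro bexI[of _ "(j, N+1)"]) auto
    next
      case False
      then have "v \<in> f i" using h by blast
      then have "v \<in> {1..N}" using fsub[OF i] by blast
      then have "1 \<le> a v" using ab by blast
      then show ?thesis using \<open>v \<in> f i\<close> \<open>v \<in> {1..N}\<close> unfolding needs_adm_def valid_pairs_def t_def
        by (intro bexI[of _ "(v, N+1)"]) auto
    qed
  qed
  have setq: "{(i,v). i < b \<and> v \<in> {1..N+1} \<and> needs_adm (N+1) t t i v}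
      = (SIGMA i:{..<b}. f i) \<union> ({..<b} \<times> {N+1})"
    using na fsub by fastforce
  have disj: "(SIGMA i:{..<b}. f i) \<inter> ({..<b} \<times> {N+1}) = {}" using fsub by fastforce
  have "card ((SIGMA i:{..<b}. f i) \<union> ({..<b} \<times> {N+1}))
      = card (SIGMA i:{..<b}. f i) + card ({..<b} \<times> {N+1})"
    by (rule card_Un_disjoint) (use disj fin_f in auto)
  also have "card (SIGMA i:{..<b}. f i) = (\<Sum>i<b. card (f i))"
    using fin_f by simp
  also have "\<dots> = sum card P" using sum.reindex_bij_betw[OF f, of card] .
  also have "\<dots> = card (\<Union>P)"
    by (rule card_Union_disjoint[symmetric]) (use dj UP in \<open>auto intro: finite_subset\<close>)
  also have "card ({..<b} \<times> {N+1}) = b" by (simp add: card_cartesian_product)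
  finally have "routing_cost (N+1) b t t = card P + N"
    unfolding routing_cost_def setq using UP b_def by simp
  then show ?thesis using feas by blast
qed

lemma lower:
  fixes N B :: nat and a :: "nat \<Rightarrow> nat"
  assumes N1: "N \<ge> 1" and ab: "\<forall>i \<in> {1..N}. 1 \<le> a i \<and> a i \<le> B"
    and feas: "feasible_routing (N+1) B (bp_demands N a) r t0 t1"
  shows "\<exists>Q. partition_on {1..N} Q \<and> (\<forall>p\<in>Q. sum a p \<le> B)
            \<and> card Q + N \<le> routing_cost (N+1) r t0 t1"
proof -
  define x where "x = (\<lambda>i j. t0 i j (N+1) + t1 i j (N+1))"
  have F1: "(\<Sum>i<r. x i j) = 2 * a j" if j: "j \<in> {1..N}" for j
  proof -
    have "(j, N+1) \<in> valid_pairs (N+1)" using j unfolding valid_pairs_def by auto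
    then have "(\<Sum>i<r. x i j) = traffic (bp_demands N a) j (N+1)"
      using feas unfolding feasible_routing_def x_def by auto
    then show ?thesis using traffic_bp[of j "N+1" N a] j by auto
  qed
  have F2: "(\<Sum>j\<in>{1..N}. x i j) \<le> 2 * B" if i: "i < r" for i
  proof -
    define T where "T = (\<lambda>l (j,k). (if arc_uses 0 j k l then t0 i j k else 0)
                     + (if arc_uses 1 j k l then t1 i j k else (0::nat)))"
    have L: "sum (T l) (valid_pairs (N+1)) \<le> B" if "l \<in> {1..N+1}" for l
      using feas i that unfolding feasible_routing_def T_def by auto
    have "(\<Sum>j\<in>{1..N}. x i j) = (\<Sum>j\<in>{1..N}. (\<lambda>p. T N p + T (N+1) p) (j, N+1))"
      by (rule sum.cong) (auto simp: T_def x_def arc_uses_def)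
    also have "\<dots> \<le> sum (\<lambda>p. T N p + T (N+1) p) (valid_pairs (N+1))"
      by (rule sum_vp_ge)
    also have "\<dots> = sum (T N) (valid_pairs (N+1)) + sum (T (N+1)) (valid_pairs (N+1))"
      by (rule sum.distrib)
    also have "\<dots> \<le> 2 * B" using L[of N] L[of "N+1"] \<open>N \<ge> 1\<close> by auto
    finally show ?thesis .
  qed

  define K where "K = (\<lambda>j. {i. i < r \<and> 0 < x i j})"
  define Sp where "Sp = {j\<in>{1..N}. 2 \<le> card (K j)}"
  define S where "S = (\<lambda>i. {j\<in>{1..N}. 0 < x i j})"
  define U where "U = {i. i < r \<and> S i \<noteq> {}}"
  define Q0 where "Q0 = (\<lambda>i. S i - Sp) ` U \<union> (\<lambda>j. {j}) ` Sp"
  define Q where "Q = Q0 - {{}}"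
  have finK: "finite (K j)" for j unfolding K_def by auto
  have K1: "K j \<noteq> {}" if j: "j \<in> {1..N}" for j
  proof
    assume "K j = {}"
    then have "(\<Sum>i<r. x i j) = 0" unfolding K_def by auto
    moreover have "1 \<le> a j" using ab j by blast
    ultimately show False using F1[OF j] by auto
  qed
  have Kone: "i = i'" if "j \<in> {1..N}" "j \<notin> Sp" "i \<in> K j" "i' \<in> K j" for i i' j
  proof (rule ccontr)
    assume "i \<noteq> i'"
    then have "card {i, i'} \<le> card (K j)" using that finK by (intro card_mono) auto
    then have "2 \<le> card (K j)" using \<open>i \<noteq> i'\<close> by simp
    then show False using that unfolding Sp_def by auto
  qed
  have xeq: "x i j = 2 * a j" if i: "i < r" and j: "j \<in> S i - Sp" for i j
  proof -
    have j1: "j \<in> {1..N}" "j \<notin> Sp" "i \<in> K j" using j i unfolding S_def K_def by auto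
    have "(\<Sum>i'<r. x i' j) = (\<Sum>i'<r. if i = i' then x i j else 0)"
    proof (rule sum.cong)
      fix i' assume "i' \<in> {..<r}"
      then show "x i' j = (if i = i' then x i j else 0)"
        using Kone[OF j1(1,2) j1(3), of i'] unfolding K_def by auto
    qed simp
    also have "\<dots> = x i j" using i by simp
    finally show ?thesis using F1[OF j1(1)] by simp
  qed
  have Ssub: "S i \<subseteq> {1..N}" for i unfolding S_def by auto
  have Spsub: "Sp \<subseteq> {1..N}" unfolding Sp_def by auto
  have UQ: "\<Union>Q = {1..N}"
  proof
    show "\<Union>Q \<subseteq> {1..N}" unfolding Q_def Q0_def using Ssub Spsub by blast
  next
    show "{1..N} \<subseteq> \<Union>Q"
    proof
      fix j assume j: "j \<in> {1..N}"
      show "j \<in> \<Union>Q"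
      proof (cases "j \<in> Sp")
        case True
        then show ?thesis unfolding Q_def Q0_def by blast
      next
        case False
        obtain i where "i \<in> K j" using K1[OF j] by blast
        then have "i \<in> U" "j \<in> S i - Sp" using j False unfolding K_def S_def U_def by auto
        then show ?thesis unfolding Q_def Q0_def by blast
      qed
    qed
  qed
  have djQ: "disjoint Q"
    unfolding pairwise_def disjnt_def
  proof (intro ballI impI)
    fix p q assume p: "p \<in> Q" and q: "q \<in> Q" and pq: "p \<noteq> q"
    show "p \<inter> q = {}"
    proof (rule ccontr)
      assume "p \<inter> q \<noteq> {}"
      then obtain j where jp: "j \<in> p" and jq: "j \<in> q" by blast
      consider (a) i i' where "i \<in> U" "i' \<in> U" "p = S i - Sp" "q = S i' - Sp"
        | (b) "j \<in> Sp" "p = {j} \<or> q = {j}"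
        | (c) j' where "j' \<in> Sp" "p = {j'}" "q = {j'}"
        | (d) j' i where "j' \<in> Sp" "p = {j'} \<or> q = {j'}" "p = S i - Sp \<or> q = S i - Sp"
        using p q jp jq unfolding Q_def Q0_def by blast
      then show False
      proof cases
        case a
        then have "j \<in> {1..N}" "j \<notin> Sp" "i \<in> K j" "i' \<in> K j"
          using jp jq unfolding S_def K_def U_def by auto
        then have "i = i'" by (rule Kone)
        then show False using a pq by simp
      next
        case b then show False using pq jp jq p q unfolding Q_def Q0_def by blast
      next
        case c then show False using pq by simp
      next
        case d then show False using jp jq by blast
      qed
    qed
  qed
  have neQ: "{} \<notin> Q" unfolding Q_def by blast
  have partQ: "partition_on {1..N} Q" unfolding partition_on_def using UQ djQ neQ by blast
  have sumQ: "sum a p \<le> B" if p: "p \<in> Q" for p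
  proof -
    consider (a) i where "i \<in> U" "p = S i - Sp" | (b) j where "j \<in> Sp" "p = {j}"
      using p unfolding Q_def Q0_def by blast
    then show ?thesis
    proof cases
      case a
      then have i: "i < r" unfolding U_def by auto
      have "2 * sum a p = (\<Sum>j\<in>p. x i j)"
        unfolding sum_distrib_left using xeq[OF i] a(2) by (intro sum.cong) auto
      also have "\<dots> \<le> (\<Sum>j\<in>{1..N}. x i j)" using a(2) Ssub by (intro sum_mono2) auto
      also have "\<dots> \<le> 2 * B" by (rule F2[OF i])
      finally show ?thesis by simp
    next
      case b then show ?thesis using ab Spsub by auto
    qed
  qed
  have finU: "finite U" unfolding U_def by auto
  have finSp: "finite Sp" using Spsub finite_subset by blast
  have cQ: "card Q \<le> card U + card Sp"
  proof -
    have "card Q \<le> card Q0" unfolding Q_def Q0_def using finU finSp by (intro card_mono) auto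
    also have "\<dots> \<le> card ((\<lambda>i. S i - Sp) ` U) + card ((\<lambda>j. {j}) ` Sp)"
      unfolding Q0_def by (rule card_Un_le)
    also have "\<dots> \<le> card U + card Sp" by (intro add_mono card_image_le finU finSp)
    finally show ?thesis .
  qed
  define A where "A = {(i,v). i < r \<and> v \<in> {1..N+1} \<and> needs_adm (N+1) t0 t1 i v}"
  define A1 where "A1 = (\<lambda>(j,i). (i,j)) ` (SIGMA j:{1..N}. K j)"
  define A2 where "A2 = U \<times> {N+1}"
  have finA: "finite A"
  proof -
    have "A \<subseteq> {..<r} \<times> {1..N+1}" unfolding A_def by auto
    then show ?thesis by (rule finite_subset) auto
  qed
  have A12: "A1 \<union> A2 \<subseteq> A"
  proof
    fix p assume "p \<in> A1 \<union> A2"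
    then consider (a) i j where "p = (i,j)" "j \<in> {1..N}" "i \<in> K j" | (b) i where "p = (i, N+1)" "i \<in> U"
      unfolding A1_def A2_def by auto
    then show "p \<in> A"
    proof cases
      case a
      then have "(j, N+1) \<in> valid_pairs (N+1)" "i < r" "0 < x i j"
        unfolding valid_pairs_def K_def by auto
      then have "needs_adm (N+1) t0 t1 i j" unfolding needs_adm_def x_def
        by (intro bexI[of _ "(j, N+1)"]) auto
      then show ?thesis using a \<open>i < r\<close> unfolding A_def by auto
    next
      case b
      then obtain j where "j \<in> S i" "i < r" unfolding U_def by auto
      then have "(j, N+1) \<in> valid_pairs (N+1)" "0 < x i j"
        unfolding valid_pairs_def S_def by auto
      then have "needs_adm (N+1) t0 t1 i (N+1)" unfolding needs_adm_def x_def
        by (intro bexI[of _ "(j, N+1)"]) auto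
      then show ?thesis using b \<open>i < r\<close> unfolding A_def by auto
    qed
  qed
  have dA: "A1 \<inter> A2 = {}" unfolding A1_def A2_def by auto
  have cA1: "card A1 = (\<Sum>j\<in>{1..N}. card (K j))"
  proof -
    have "card A1 = card (SIGMA j:{1..N}. K j)"
      unfolding A1_def by (rule card_image) (auto simp: inj_on_def)
    also have "\<dots> = (\<Sum>j\<in>{1..N}. card (K j))" using finK by simp
    finally show ?thesis .
  qed
  have "(\<Sum>j\<in>{1..N}. if j \<in> Sp then 2 else 1) \<le> (\<Sum>j\<in>{1..N}. card (K j))"
  proof (rule sum_mono)
    fix j assume j: "j \<in> {1..N}"
    show "(if j \<in> Sp then 2 else 1) \<le> card (K j)"
      using K1[OF j] finK[of j] j unfolding Sp_def by (auto simp: Suc_le_eq card_gt_0_iff)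
  qed
  moreover have "(\<Sum>j\<in>{1..N}. if j \<in> Sp then 2 else 1) = 2 * card Sp + card ({1..N} - Sp)"
    using Spsub by (simp add: sum.If_cases Int_absorb1 Diff_eq)
  moreover have "card ({1..N} - Sp) = N - card Sp" using Spsub finSp by (simp add: card_Diff_subset)
  moreover have "card Sp \<le> N" using card_mono[OF _ Spsub] by simp
  ultimately have cA1': "card Sp + N \<le> card A1" using cA1 by linarith
  have "card A1 + card A2 = card (A1 \<union> A2)"
    using finA A12 dA by (intro card_Un_disjoint[symmetric]) (auto intro: finite_subset)
  also have "\<dots> \<le> card A" using finA A12 by (intro card_mono)
  finally have "card A1 + card U \<le> routing_cost (N+1) r t0 t1"
    unfolding A2_def A_def routing_cost_def by (simp add: card_cartesian_product)
  then have "card Q + N \<le> routing_cost (N+1) r t0 t1" using cQ cA1' by linarith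
  then show ?thesis using partQ sumQ by blast
qed

theorem mainTheorem2:
  fixes N B :: nat and a :: "nat \<Rightarrow> nat"
  assumes "N \<ge> 1" and "B \<ge> 1"
    and "\<forall>i \<in> {1..N}. 1 \<le> a i \<and> a i \<le> B"
  shows "min_adms (N + 1) B (bp_demands N a) = bin_packing_opt N a B + N"
proof -
  define Pr where "Pr = (\<lambda>b. \<exists>P. partition_on {1..N} P \<and> card P = b \<and> (\<forall>p\<in>P. sum a p \<le> B))"
  have "partition_on {1..N} ((\<lambda>j. {j}) ` {1..N})"
    unfolding partition_on_def pairwise_def disjnt_def by auto
  moreover have "\<forall>p\<in>(\<lambda>j. {j}) ` {1..N}. sum a p \<le> B" using assms(3) by auto
  ultimately have "Pr (card ((\<lambda>j. {j}) ` {1..N}))" unfolding Pr_def by blast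
  then have "Pr (Least Pr)" by (rule LeastI)
  then obtain P0 where P0: "partition_on {1..N} P0" "card P0 = bin_packing_opt N a B"
      "\<forall>p\<in>P0. sum a p \<le> B"
    unfolding Pr_def bin_packing_opt_def by auto
  have ble: "bin_packing_opt N a B \<le> card Q"
    if "partition_on {1..N} Q" "\<forall>p\<in>Q. sum a p \<le> B" for Q
    unfolding bin_packing_opt_def by (rule Least_le) (use that in blast)
  show ?thesis
    unfolding min_adms_def
  proof (rule Least_equality)
    show "\<exists>r t0 t1. feasible_routing (N + 1) B (bp_demands N a) r t0 t1 \<and>
        routing_cost (N + 1) r t0 t1 = bin_packing_opt N a B + N"
      using upper[OF assms(3) P0(1) P0(3)] P0(2) by simp
  next
    fix y assume "\<exists>r t0 t1. feasible_routing (N + 1) B (bp_demands N a) r t0 t1 \<and>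
        routing_cost (N + 1) r t0 t1 = y"
    then obtain r t0 t1 where "feasible_routing (N + 1) B (bp_demands N a) r t0 t1"
        "routing_cost (N + 1) r t0 t1 = y" by blast
    then show "bin_packing_opt N a B + N \<le> y"
      using lower[OF assms(1) assms(3)] ble by fastforce
  qed
qed

end
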